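(* Let $\psi$ be a CNF formula with only positive literals, with clauses $C_1,\dots,C_m$ each consisting of three distinct variables, and variables $x_1,\dots,x_p$, in which every variable appears in at least $3$ clauses. Let $G$ be the graph constructed as follows: (1) for each variable $x_i$ create a cycle $D_i$ whose number of vertices equals the number of clauses containing $x_i$, and, for each clause containing $x_i$, designate a distinct vertex of $D_i$ as corresponding to that clause; (2) add a vertex $a$ adjacent to every vertex of all cycles $D_1,\dots,D_p$; (3) subdivide every edge of the cycles and every edge incident to $a$ exactly twice (replacing it by a path with three edges); (4) for each clause $C_i=\{x_j,x_k,x_\ell\}$ add a triangle on new vertices $u_{ij},u_{ik},u_{i\ell}$ and make $u_{ij}$ adjacent to the vertex of $D_j$ corresponding to $C_i$, $u_{ik}$ adjacent to the vertex of $D_k$ corresponding to $C_i$, and $u_{i\ell}$ adjacent to the vertex of $D_\ell$ corresponding to $C_i$. If $G$ has a $1$-shallow topological minor of density $\frac{5m}{2m+1}$, then $\psi$ has an assignment in which every clause contains exactly one true variable.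
   Context: A graph $H$ is a $1$-shallow topological minor of $G$ if some graph obtained from $H$ by subdividing each edge at most twice is isomorphic to a subgraph of $G$. The density of $H$ is $\|H\|/|H|$ (number of edges divided by number of vertices). *)

theory Defs
  imports Main Complex_Main
begin

definition simple_graph :: "'v set \<Rightarrow> 'v set set \<Rightarrow> bool" where
  "simple_graph V E \<longleftrightarrow> finite V \<and>
     (\<forall>e\<in>E. \<exists>x y. x \<noteq> y \<and> x \<in> V \<and> y \<in> V \<and> e = {x, y})"

definition inner :: "'v list \<Rightarrow> 'v set" where
  "inner xs = set (butlast (tl xs))"

(* H = (VH, EH) is a 1-shallow topological minor of G = (V, E): some graph obtained from H
   by subdividing each edge at most twice is isomorphic to a subgraph of G. *)
definition one_shallow_top_minor ::
  "'h set \<Rightarrow> 'h set set \<Rightarrow> 'v set \<Rightarrow> 'v set set \<Rightarrow> bool" where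
  "one_shallow_top_minor VH EH V E \<longleftrightarrow>
     (\<exists>(\<phi>::'h \<Rightarrow> 'v) (P::'h set \<Rightarrow> 'v list).
        inj_on \<phi> VH \<and> \<phi> ` VH \<subseteq> V \<and>
        (\<forall>e\<in>EH.
           2 \<le> length (P e) \<and> length (P e) \<le> 4 \<and> distinct (P e) \<and>
           set (P e) \<subseteq> V \<and>
           \<phi> ` e = {hd (P e), last (P e)} \<and>
           (\<forall>k. Suc k < length (P e) \<longrightarrow> {P e ! k, P e ! Suc k} \<in> E) \<and>
           inner (P e) \<inter> \<phi> ` VH = {}) \<and>
        (\<forall>e\<in>EH. \<forall>e'\<in>EH. e \<noteq> e' \<longrightarrow> inner (P e) \<inter> inner (P e') = {}))"

definition density :: "'v set \<Rightarrow> 'v set set \<Rightarrow> real" where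
  "density V E = real (card E) / real (card V)"

(* Clauses are indexed 0..m-1 (cl i = set of variables of clause i), variables 0..p-1.
   Cyc j t      : t-th vertex (t < deg j) of the cycle D_j
   SubC j t s   : s-th subdivision vertex (s < 2) of the cycle edge Cyc j t -- Cyc j ((t+1) mod deg j)
   SubA j t s   : s-th subdivision vertex (s < 2) of the edge a -- Cyc j t
   Tri i j      : triangle vertex u_ij of clause i for variable j \<in> cl i *)
datatype gvert = Apex | Cyc nat nat | SubC nat nat nat | SubA nat nat nat | Tri nat nat

definition deg :: "nat \<Rightarrow> (nat \<Rightarrow> nat set) \<Rightarrow> nat \<Rightarrow> nat" where
  "deg m cl j = card {i. i < m \<and> j \<in> cl i}"

definition G_verts :: "nat \<Rightarrow> nat \<Rightarrow> (nat \<Rightarrow> nat set) \<Rightarrow> gvert set" where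
  "G_verts m p cl =
     {Apex}
     \<union> {Cyc j t | j t. j < p \<and> t < deg m cl j}
     \<union> {SubC j t s | j t s. j < p \<and> t < deg m cl j \<and> s < 2}
     \<union> {SubA j t s | j t s. j < p \<and> t < deg m cl j \<and> s < 2}
     \<union> {Tri i j | i j. i < m \<and> j \<in> cl i}"

(* ord j t = index of the clause to which the t-th vertex of D_j corresponds *)
definition G_edges ::
  "nat \<Rightarrow> nat \<Rightarrow> (nat \<Rightarrow> nat set) \<Rightarrow> (nat \<Rightarrow> nat \<Rightarrow> nat) \<Rightarrow> gvert set set" where
  "G_edges m p cl ord =
     {{Cyc j t, SubC j t 0} | j t. j < p \<and> t < deg m cl j}
     \<union> {{SubC j t 0, SubC j t 1} | j t. j < p \<and> t < deg m cl j}
     \<union> {{SubC j t 1, Cyc j ((t + 1) mod deg m cl j)} | j t. j < p \<and> t < deg m cl j}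
     \<union> {{Apex, SubA j t 0} | j t. j < p \<and> t < deg m cl j}
     \<union> {{SubA j t 0, SubA j t 1} | j t. j < p \<and> t < deg m cl j}
     \<union> {{SubA j t 1, Cyc j t} | j t. j < p \<and> t < deg m cl j}
     \<union> {{Tri i j, Tri i k} | i j k. i < m \<and> j \<in> cl i \<and> k \<in> cl i \<and> j \<noteq> k}
     \<union> {{Tri i j, Cyc j t} | i j t. i < m \<and> j \<in> cl i \<and> j < p \<and> t < deg m cl j \<and> ord j t = i}"

end

theory Submission imports Defs begin

definition adjd :: "nat \<Rightarrow> nat \<Rightarrow> (nat \<Rightarrow> nat set) \<Rightarrow> (nat \<Rightarrow> nat \<Rightarrow> nat) \<Rightarrow> gvert \<Rightarrow> gvert \<Rightarrow> bool" where
 "adjd m p cl ord x y \<longleftrightarrow>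
   (\<exists>j t. j < p \<and> t < deg m cl j \<and>
     ((x = Cyc j t \<and> y = SubC j t 0) \<or> (x = SubC j t 0 \<and> y = SubC j t 1) \<or>
      (x = SubC j t 1 \<and> y = Cyc j ((t + 1) mod deg m cl j)) \<or> (x = Apex \<and> y = SubA j t 0) \<or>
      (x = SubA j t 0 \<and> y = SubA j t 1) \<or> (x = SubA j t 1 \<and> y = Cyc j t))) \<or>
   (\<exists>i j k. i < m \<and> j \<in> cl i \<and> k \<in> cl i \<and> j \<noteq> k \<and> x = Tri i j \<and> y = Tri i k) \<or>
   (\<exists>i j t. i < m \<and> j \<in> cl i \<and> j < p \<and> t < deg m cl j \<and> ord j t = i \<and> x = Tri i j \<and> y = Cyc j t)"

lemma adjd_sym: "{x,y} = {a,b} \<Longrightarrow> adjd m p cl ord a b \<Longrightarrow> adjd m p cl ord x y \<or> adjd m p cl ord y x"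
  by (auto simp: doubleton_eq_iff)

lemma E_char: "{x,y} \<in> G_edges m p cl ord \<Longrightarrow> adjd m p cl ord x y \<or> adjd m p cl ord y x"
  unfolding G_edges_def
  apply (elim UnE CollectE exE conjE)
  subgoal by (erule adjd_sym, unfold adjd_def, blast)
  subgoal by (erule adjd_sym, unfold adjd_def, blast)
  subgoal by (erule adjd_sym, unfold adjd_def, blast)
  subgoal by (erule adjd_sym, unfold adjd_def, blast)
  subgoal by (erule adjd_sym, unfold adjd_def, blast)
  subgoal by (erule adjd_sym, unfold adjd_def, blast)
  subgoal by (erule adjd_sym, unfold adjd_def, blast)
  subgoal by (erule adjd_sym, unfold adjd_def, blast)
  done


lemma nbr_SubC0: "{SubC j t 0, y} \<in> G_edges m p cl ord \<Longrightarrow> y = Cyc j t \<or> y = SubC j t 1"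
  by (drule E_char) (auto simp: adjd_def)
lemma nbr_SubC1: "{SubC j t 1, y} \<in> G_edges m p cl ord \<Longrightarrow> y = SubC j t 0 \<or> y = Cyc j ((t+1) mod deg m cl j)"
  by (drule E_char) (auto simp: adjd_def)
lemma nbr_SubC: "{SubC j t s, y} \<in> G_edges m p cl ord \<Longrightarrow> y \<in> {SubC j t 0, Cyc j ((t+1) mod deg m cl j), Cyc j t, SubC j t 1}"
  by (drule E_char) (auto simp: adjd_def)
lemma nbr_SubA0: "{SubA j t 0, y} \<in> G_edges m p cl ord \<Longrightarrow> y = Apex \<or> y = SubA j t 1"
  by (drule E_char) (auto simp: adjd_def)
lemma nbr_SubA1: "{SubA j t 1, y} \<in> G_edges m p cl ord \<Longrightarrow> y = SubA j t 0 \<or> y = Cyc j t"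
  by (drule E_char) (auto simp: adjd_def)
lemma nbr_SubA: "{SubA j t s, y} \<in> G_edges m p cl ord \<Longrightarrow> y \<in> {Apex, SubA j t 1, SubA j t 0, Cyc j t}"
  by (drule E_char) (auto simp: adjd_def)
lemma nbr_Apex: "{Apex, y} \<in> G_edges m p cl ord \<Longrightarrow> \<exists>j t. j < p \<and> t < deg m cl j \<and> y = SubA j t 0"
  by (drule E_char) (auto simp: adjd_def)
lemma nbr_Tri: "{Tri i j, y} \<in> G_edges m p cl ord \<Longrightarrow>
   (\<exists>k. k \<in> cl i \<and> k \<noteq> j \<and> y = Tri i k) \<or> (\<exists>t. t < deg m cl j \<and> ord j t = i \<and> y = Cyc j t)"
  by (drule E_char) (auto simp: adjd_def)
lemma nbr_Cyc: "{Cyc j t, y} \<in> G_edges m p cl ord \<Longrightarrow>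
   y = SubC j t 0 \<or> y = SubA j t 1 \<or> y = Tri (ord j t) j \<or>
   (\<exists>t'. t' < deg m cl j \<and> (t'+1) mod deg m cl j = t \<and> y = SubC j t' 1)"
  by (drule E_char) (auto simp: adjd_def)


lemma mem_Cyc_SubC: "j < p \<Longrightarrow> t < deg m cl j \<Longrightarrow> {Cyc j t, SubC j t 0} \<in> G_edges m p cl ord"
  unfolding G_edges_def by (intro UnI1) blast
lemma mem_Cyc_Tri: "i < m \<Longrightarrow> j \<in> cl i \<Longrightarrow> j < p \<Longrightarrow> t < deg m cl j \<Longrightarrow> ord j t = i \<Longrightarrow>
   {Cyc j t, Tri i j} \<in> G_edges m p cl ord"
proof -
  assume a: "i < m" "j \<in> cl i" "j < p" "t < deg m cl j" "ord j t = i"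
  have "{Tri i j, Cyc j t} \<in> G_edges m p cl ord" unfolding G_edges_def using a by (intro UnI2) blast
  thus ?thesis by (simp add: insert_commute)
qed

lemma pred_unique: "t' < (d::nat) \<Longrightarrow> (t'+1) mod d = t \<Longrightarrow> t' = (if t = 0 then d - 1 else t - 1)"
proof -
  assume a: "t' < d" "(t'+1) mod d = t"
  show ?thesis
  proof (cases "t' + 1 < d")
    case True thus ?thesis using a by auto
  next
    case False hence "t' + 1 = d" using a by auto
    thus ?thesis using a by auto
  qed
qed

lemma inner_rev: "inner (rev xs) = inner xs"
proof -
  have "tl (rev xs) = rev (butlast xs)" by (metis butlast_rev rev_rev_ident)
  hence "butlast (tl (rev xs)) = rev (butlast (tl xs))" by (simp add: butlast_tl)
  thus ?thesis unfolding inner_def by simp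
qed

lemma inner_nth: "0 < k \<Longrightarrow> Suc k < length xs \<Longrightarrow> xs ! k \<in> inner xs"
  unfolding inner_def
proof -
  assume a: "0 < k" "Suc k < length xs"
  have "butlast (tl xs) ! (k - 1) = xs ! k" using a
    by (simp add: nth_butlast nth_tl)
  moreover have "k - 1 < length (butlast (tl xs))" using a by simp
  ultimately show "xs ! k \<in> set (butlast (tl xs))" by (metis nth_mem)
qed

lemma inner_card: "card (inner xs) \<le> length xs - 2"
  unfolding inner_def by (metis card_length length_butlast length_tl diff_diff_left one_add_one)

fun grp :: "(nat \<Rightarrow> nat \<Rightarrow> nat) \<Rightarrow> gvert \<Rightarrow> nat" where
  "grp ord Apex = 0" | "grp ord (Cyc j t) = ord j t" | "grp ord (SubC j t s) = ord j t"
| "grp ord (SubA j t s) = ord j t" | "grp ord (Tri i j) = i"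

fun vj :: "gvert \<Rightarrow> nat" where
  "vj Apex = 0" | "vj (Cyc j t) = j" | "vj (SubC j t s) = j" | "vj (SubA j t s) = j" | "vj (Tri i j) = j"

fun is_cyc :: "gvert \<Rightarrow> bool" where
  "is_cyc (Cyc j t) = True" | "is_cyc _ = False"


locale L =
  fixes m p :: nat and cl :: "nat \<Rightarrow> nat set" and ord :: "nat \<Rightarrow> nat \<Rightarrow> nat"
    and VH :: "'h set" and EH :: "'h set set" and \<phi> :: "'h \<Rightarrow> gvert" and P :: "'h set \<Rightarrow> gvert list"
  assumes clauses: "\<forall>i<m. cl i \<subseteq> {..<p} \<and> card (cl i) = 3"
    and occ: "\<forall>j<p. 3 \<le> deg m cl j"
    and cyc: "\<forall>j<p. bij_betw (ord j) {..<deg m cl j} {i. i < m \<and> j \<in> cl i}"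
    and H: "simple_graph VH EH"
    and phi_inj: "inj_on \<phi> VH" and phiV: "\<phi> ` VH \<subseteq> G_verts m p cl"
    and pth: "\<forall>e\<in>EH.
           2 \<le> length (P e) \<and> length (P e) \<le> 4 \<and> distinct (P e) \<and>
           set (P e) \<subseteq> G_verts m p cl \<and>
           \<phi> ` e = {hd (P e), last (P e)} \<and>
           (\<forall>k. Suc k < length (P e) \<longrightarrow> {P e ! k, P e ! Suc k} \<in> G_edges m p cl ord) \<and>
           inner (P e) \<inter> \<phi> ` VH = {}"
    and dsj: "\<forall>e\<in>EH. \<forall>e'\<in>EH. e \<noteq> e' \<longrightarrow> inner (P e) \<inter> inner (P e') = {}"
begin

abbreviation "B \<equiv> \<phi> ` VH"
abbreviation "E \<equiv> G_edges m p cl ord"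
abbreviation "V \<equiv> G_verts m p cl"
abbreviation "d j \<equiv> deg m cl j"

lemma ord_lt: "j < p \<Longrightarrow> t < d j \<Longrightarrow> ord j t < m \<and> j \<in> cl (ord j t)"
proof -
  assume a: "j < p" "t < d j"
  have "bij_betw (ord j) {..<d j} {i. i < m \<and> j \<in> cl i}" using cyc a by blast
  hence "ord j t \<in> {i. i < m \<and> j \<in> cl i}" by (rule bij_betw_apply) (simp add: a)
  thus ?thesis by simp
qed

lemma ord_inj: "j < p \<Longrightarrow> t < d j \<Longrightarrow> t' < d j \<Longrightarrow> ord j t = ord j t' \<Longrightarrow> t = t'"
proof -
  assume a: "j < p" "t < d j" "t' < d j" "ord j t = ord j t'"
  have "bij_betw (ord j) {..<d j} {i. i < m \<and> j \<in> cl i}" using cyc a by blast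
  hence "inj_on (ord j) {..<d j}" by (rule bij_betw_imp_inj_on)
  thus ?thesis using a by (simp add: inj_on_def)
qed

lemma cl_p: "i < m \<Longrightarrow> j \<in> cl i \<Longrightarrow> j < p"
  using clauses by blast

lemma ord_surj: "i < m \<Longrightarrow> j \<in> cl i \<Longrightarrow> \<exists>t < d j. ord j t = i"
proof -
  assume a: "i < m" "j \<in> cl i"
  hence "j < p" by (rule cl_p)
  hence "bij_betw (ord j) {..<d j} {i. i < m \<and> j \<in> cl i}" using cyc by blast
  hence "ord j ` {..<d j} = {i. i < m \<and> j \<in> cl i}" by (rule bij_betw_imp_surj_on)
  hence "i \<in> ord j ` {..<d j}" using a by blast
  thus ?thesis by auto
qed

lemma Vcases: "x \<in> V \<Longrightarrow> x = Apex \<or> (\<exists>j t. x = Cyc j t \<and> j < p \<and> t < d j)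
   \<or> (\<exists>j t s. x = SubC j t s \<and> j < p \<and> t < d j \<and> s < 2)
   \<or> (\<exists>j t s. x = SubA j t s \<and> j < p \<and> t < d j \<and> s < 2)
   \<or> (\<exists>i j. x = Tri i j \<and> i < m \<and> j \<in> cl i)"
  unfolding G_verts_def by blast

lemma finVH: "finite VH" using H unfolding simple_graph_def by blast

lemma edge2: "e \<in> EH \<Longrightarrow> \<exists>x y. x \<noteq> y \<and> x \<in> VH \<and> y \<in> VH \<and> e = {x,y}"
  using H unfolding simple_graph_def by blast

lemma finEH: "finite EH"
proof -
  have "EH \<subseteq> Pow VH" using edge2 by blast
  thus ?thesis using finVH by (meson finite_Pow_iff finite_subset)
qed

lemma e_sub: "e \<in> EH \<Longrightarrow> e \<subseteq> VH" using edge2 by blast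

definition opp :: "'h \<Rightarrow> 'h set \<Rightarrow> gvert list" where
  "opp h e = (if hd (P e) = \<phi> h then P e else rev (P e))"

definition nb :: "'h \<Rightarrow> 'h set \<Rightarrow> gvert" where
  "nb h e = opp h e ! 1"

lemma op_basic:
  assumes "e \<in> EH" "h \<in> e"
  shows "2 \<le> length (opp h e)" "length (opp h e) \<le> 4" "distinct (opp h e)" "set (opp h e) \<subseteq> V"
    "inner (opp h e) = inner (P e)" "inner (opp h e) \<inter> B = {}"
  using assms pth unfolding opp_def by (auto simp: inner_rev)

lemma op_edge:
  assumes "e \<in> EH" "h \<in> e" "Suc k < length (opp h e)"
  shows "{opp h e ! k, opp h e ! Suc k} \<in> E"
proof (cases "hd (P e) = \<phi> h")
  case True thus ?thesis using assms pth unfolding opp_def by auto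
next
  case False
  let ?xs = "P e" let ?n = "length (P e)"
  have o: "opp h e = rev ?xs" using False unfolding opp_def by simp
  have n: "Suc k < ?n" using assms o by simp
  have mem: "{?xs ! (?n - 2 - k), ?xs ! Suc (?n - 2 - k)} \<in> E" using pth assms(1) n by auto
  have ar: "?n - Suc k = Suc (?n - 2 - k)" "?n - Suc (Suc k) = ?n - 2 - k" using n by arith+
  have r1: "rev ?xs ! k = ?xs ! Suc (?n - 2 - k)" using n ar(1) by (simp add: rev_nth)
  have r2: "rev ?xs ! Suc k = ?xs ! (?n - 2 - k)" using n ar(2) by (simp add: rev_nth)
  have "{rev ?xs ! k, rev ?xs ! Suc k} = {?xs ! (?n - 2 - k), ?xs ! Suc (?n - 2 - k)}"
    unfolding r1 r2 by (rule insert_commute)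
  thus ?thesis using o mem by simp
qed

lemma op_ends:
  assumes "e \<in> EH" "h \<in> e"
  shows "hd (opp h e) = \<phi> h \<and> (\<exists>h2\<in>VH. h2 \<noteq> h \<and> e = {h, h2} \<and> last (opp h e) = \<phi> h2)"
proof -
  obtain x y where xy: "x \<noteq> y" "x \<in> VH" "y \<in> VH" "e = {x,y}" using edge2 assms(1) by blast
  obtain h2 where h2: "h2 \<in> VH" "h2 \<noteq> h" "e = {h,h2}" using xy assms(2) by blast
  have hV: "h \<in> VH" using xy assms(2) by blast
  have ne: "\<phi> h \<noteq> \<phi> h2" using inj_onD[OF phi_inj _ hV h2(1)] h2(2) by blast
  have pe: "\<phi> ` e = {hd (P e), last (P e)}" "2 \<le> length (P e)" "distinct (P e)" using pth assms by auto
  have hl: "hd (P e) \<noteq> last (P e)"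
  proof -
    have ne: "P e \<noteq> []" using pe(2) by auto
    have "P e ! 0 \<noteq> P e ! (length (P e) - 1)"
    proof
      assume "P e ! 0 = P e ! (length (P e) - 1)"
      moreover have "0 < length (P e)" "length (P e) - 1 < length (P e)" using pe(2) by auto
      ultimately have "0 = length (P e) - 1" using pe(3) nth_eq_iff_index_eq[of "P e" 0 "length (P e) - 1"] by blast
      thus False using pe(2) by simp
    qed
    thus ?thesis using ne by (simp add: hd_conv_nth last_conv_nth)
  qed
  have im: "{\<phi> h, \<phi> h2} = {hd (P e), last (P e)}" using pe(1) h2(3) by simp
  show ?thesis
  proof (cases "hd (P e) = \<phi> h")
    case True
    hence "last (P e) = \<phi> h2" using im ne hl by (auto simp: doubleton_eq_iff)
    thus ?thesis using True h2 unfolding opp_def by auto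
  next
    case False
    hence a: "last (P e) = \<phi> h" "hd (P e) = \<phi> h2" using im by (auto simp: doubleton_eq_iff)
    have "P e \<noteq> []" using pe(2) by auto
    hence "hd (opp h e) = \<phi> h" "last (opp h e) = \<phi> h2" using False a unfolding opp_def by (simp_all add: hd_rev last_rev)
    thus ?thesis using h2 by blast
  qed
qed


lemma opp_ne: "e \<in> EH \<Longrightarrow> h \<in> e \<Longrightarrow> opp h e \<noteq> []"
  using op_basic(1)[of e h] by auto

lemma opp0: "e \<in> EH \<Longrightarrow> h \<in> e \<Longrightarrow> opp h e ! 0 = \<phi> h"
  using op_ends[of e h] opp_ne[of e h] by (simp add: hd_conv_nth)

lemma last_B: "e \<in> EH \<Longrightarrow> h \<in> e \<Longrightarrow> last (opp h e) \<in> B"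
  using op_ends[of e h] by auto

lemma inner_notB: "e \<in> EH \<Longrightarrow> h \<in> e \<Longrightarrow> 0 < k \<Longrightarrow> Suc k < length (opp h e) \<Longrightarrow>
   opp h e ! k \<notin> B \<and> opp h e ! k \<in> inner (P e)"
  using inner_nth[of k "opp h e"] op_basic(5,6)[of e h] by auto

lemma notB_next: "e \<in> EH \<Longrightarrow> h \<in> e \<Longrightarrow> 0 < k \<Longrightarrow> k < length (opp h e) \<Longrightarrow> opp h e ! k \<notin> B \<Longrightarrow>
   Suc k < length (opp h e)"
proof (rule ccontr)
  assume a: "e \<in> EH" "h \<in> e" "0 < k" "k < length (opp h e)" "opp h e ! k \<notin> B" "\<not> Suc k < length (opp h e)"
  hence "k = length (opp h e) - 1" by arith
  hence "opp h e ! k = last (opp h e)" using opp_ne[OF a(1,2)] by (simp add: last_conv_nth)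
  thus False using last_B[OF a(1,2)] a(5) by simp
qed

lemma nb_edge: "e \<in> EH \<Longrightarrow> h \<in> e \<Longrightarrow> {\<phi> h, nb h e} \<in> E"
  using op_edge[of e h 0] op_basic(1)[of e h] opp0[of e h] unfolding nb_def by simp

lemma nb_inj:
  assumes e: "e \<in> EH" "h \<in> e" and e': "e' \<in> EH" "h \<in> e'" and eq: "nb h e = nb h e'"
  shows "e = e'"
proof (cases "nb h e \<in> B")
  case True
  have l1: "length (opp h e) = 2"
  proof -
    have "\<not> Suc 1 < length (opp h e)" using inner_notB[OF e, of 1] True unfolding nb_def by auto
    thus ?thesis using op_basic(1)[OF e] by arith
  qed
  have l2: "length (opp h e') = 2"
  proof -
    have "\<not> Suc 1 < length (opp h e')" using inner_notB[OF e', of 1] True eq unfolding nb_def by auto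
    thus ?thesis using op_basic(1)[OF e'] by arith
  qed
  have "last (opp h e) = nb h e" using l1 opp_ne[OF e] unfolding nb_def by (simp add: last_conv_nth)
  moreover have "last (opp h e') = nb h e'" using l2 opp_ne[OF e'] unfolding nb_def by (simp add: last_conv_nth)
  moreover obtain h2 where h2: "h2 \<in> VH" "e = {h,h2}" "last (opp h e) = \<phi> h2" using op_ends[OF e] by blast
  moreover obtain h3 where h3: "h3 \<in> VH" "e' = {h,h3}" "last (opp h e') = \<phi> h3" using op_ends[OF e'] by blast
  ultimately have "\<phi> h2 = \<phi> h3" using eq by simp
  hence "h2 = h3" using inj_onD[OF phi_inj _ h2(1) h3(1)] by blast
  thus ?thesis using h2 h3 by simp
next
  case False
  have s1: "Suc 1 < length (opp h e)" using notB_next[OF e, of 1] op_basic(1)[OF e] False unfolding nb_def by auto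
  have s2: "Suc 1 < length (opp h e')" using notB_next[OF e', of 1] op_basic(1)[OF e'] False eq unfolding nb_def by auto
  have "nb h e \<in> inner (P e)" using inner_notB[OF e, of 1] s1 unfolding nb_def by auto
  moreover have "nb h e \<in> inner (P e')" using inner_notB[OF e', of 1] s2 eq unfolding nb_def by auto
  ultimately show ?thesis using dsj e(1) e'(1) by blast
qed

definition I :: "('h set \<times> 'h) set" where "I = Sigma EH (\<lambda>e. e)"
definition nbi :: "'h set \<times> 'h \<Rightarrow> gvert" where "nbi \<iota> = nb (snd \<iota>) (fst \<iota>)"
definition fiber :: "gvert \<Rightarrow> ('h set \<times> 'h) set" where "fiber x = {\<iota> \<in> I. \<phi> (snd \<iota>) = x}"
definition Dg :: "gvert \<Rightarrow> nat" where "Dg x = card (fiber x)"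

lemma I_mem: "\<iota> \<in> I \<Longrightarrow> fst \<iota> \<in> EH \<and> snd \<iota> \<in> fst \<iota> \<and> snd \<iota> \<in> VH"
proof -
  assume "\<iota> \<in> I"
  then obtain e h where eh: "\<iota> = (e,h)" "e \<in> EH" "h \<in> e" unfolding I_def by blast
  thus ?thesis using e_sub[OF eh(2)] by auto
qed

lemma finI: "finite I"
proof -
  have fe: "\<forall>e\<in>EH. finite e" using e_sub finVH finite_subset by blast
  thus ?thesis unfolding I_def using finEH by (simp add: finite_SigmaI)
qed

lemma I_card: "card I = 2 * card EH"
proof -
  have fe: "\<forall>e\<in>EH. finite e" using e_sub finVH finite_subset by blast
  have "card I = (\<Sum>e\<in>EH. card e)" unfolding I_def
    using card_SigmaI[OF finEH fe] .
  also have "\<dots> = (\<Sum>e\<in>EH. 2)"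
  proof (rule sum.cong)
    fix e assume "e \<in> EH"
    then obtain x y where "x \<noteq> y" "e = {x,y}" using edge2 by blast
    thus "card e = 2" by simp
  qed simp
  finally show ?thesis by simp
qed

lemma fiber_inj: "inj_on nbi (fiber x)"
proof (rule inj_onI)
  fix a b assume a: "a \<in> fiber x" "b \<in> fiber x" "nbi a = nbi b"
  obtain e h where ab: "a = (e,h)" by (cases a)
  obtain e' h' where bb: "b = (e',h')" by (cases b)
  have ia: "e \<in> EH" "h \<in> e" "h \<in> VH" "\<phi> h = x" using a(1) I_mem[of a] ab unfolding fiber_def by auto
  have ib: "e' \<in> EH" "h' \<in> e'" "h' \<in> VH" "\<phi> h' = x" using a(2) I_mem[of b] bb unfolding fiber_def by auto
  have "h = h'" using inj_onD[OF phi_inj _ ia(3) ib(3)] ia(4) ib(4) by simp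
  hence "e = e'" using nb_inj[OF ia(1,2)] ib(1,2) a(3) ab bb unfolding nbi_def by simp
  thus "a = b" using ab bb \<open>h = h'\<close> by simp
qed

lemma fiber_img: "nbi ` fiber x \<subseteq> {y. {x,y} \<in> E}"
  unfolding fiber_def nbi_def using nb_edge I_mem by force

lemma Dg_le: "finite N \<Longrightarrow> {y. {x,y} \<in> E} \<subseteq> N \<Longrightarrow> Dg x \<le> card N"
  unfolding Dg_def using card_inj_on_le[OF fiber_inj] fiber_img by (meson order_trans)

lemma Dg_full: "finite N \<Longrightarrow> {y. {x,y} \<in> E} \<subseteq> N \<Longrightarrow> card N \<le> Dg x \<Longrightarrow> y \<in> N \<Longrightarrow> \<exists>\<iota>\<in>fiber x. nbi \<iota> = y"
proof -
  assume a: "finite N" "{y. {x,y} \<in> E} \<subseteq> N" "card N \<le> Dg x" "y \<in> N"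
  have s: "nbi ` fiber x \<subseteq> N" using fiber_img a(2) by blast
  have "card (nbi ` fiber x) = Dg x" unfolding Dg_def using fiber_inj by (simp add: card_image)
  hence "nbi ` fiber x = N" using card_seteq[OF a(1) s] a(3) by simp
  thus ?thesis using a(4) by blast
qed

lemma card2: "card {a,b} \<le> 2" by (cases "a = b") auto

definition NCyc :: "nat \<Rightarrow> nat \<Rightarrow> gvert set" where
  "NCyc j t = {SubC j t 0, SubA j t 1, Tri (ord j t) j, SubC j (if t = 0 then d j - 1 else t - 1) 1}"

lemma NCyc: "{y. {Cyc j t, y} \<in> E} \<subseteq> NCyc j t" "finite (NCyc j t)" "card (NCyc j t) \<le> 4"
proof -
  show "{y. {Cyc j t, y} \<in> E} \<subseteq> NCyc j t"
  proof
    fix y assume "y \<in> {y. {Cyc j t, y} \<in> E}"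
    hence "y = SubC j t 0 \<or> y = SubA j t 1 \<or> y = Tri (ord j t) j \<or>
      (\<exists>t'. t' < d j \<and> (t'+1) mod d j = t \<and> y = SubC j t' 1)" using nbr_Cyc by blast
    thus "y \<in> NCyc j t" unfolding NCyc_def using pred_unique by blast
  qed
  show "finite (NCyc j t)" unfolding NCyc_def by simp
  show "card (NCyc j t) \<le> 4" unfolding NCyc_def by (simp add: card_insert_if)
qed

lemma Dg_bound: "x \<in> B \<Longrightarrow> x \<noteq> Apex \<Longrightarrow> Dg x \<le> 4 \<and> (\<not> is_cyc x \<longrightarrow> Dg x \<le> 3)"
proof -
  assume xB: "x \<in> B" and xa: "x \<noteq> Apex"
  have "x \<in> V" using xB phiV by blast
  then consider (c) j t where "x = Cyc j t"
    | (sc) j t s where "x = SubC j t s" "s < 2"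
    | (sa) j t s where "x = SubA j t s" "s < 2"
    | (tr) i j where "x = Tri i j" "i < m" "j \<in> cl i"
    using Vcases[OF \<open>x \<in> V\<close>] xa by blast
  thus ?thesis
  proof cases
    case c
    have "Dg (Cyc j t) \<le> 4" using Dg_le[OF NCyc(2)[of j t] NCyc(1)[of j t]] NCyc(3)[of j t] by linarith
    thus ?thesis using c by simp
  next
    case sc
    have "Dg x \<le> 2"
    proof (cases "s = 0")
      case True
      have sub: "{y. {x,y} \<in> E} \<subseteq> {Cyc j t, SubC j t 1}"
      proof
        fix y assume "y \<in> {y. {x,y} \<in> E}"
        hence "{SubC j t 0, y} \<in> E" using sc(1) True by simp
        thus "y \<in> {Cyc j t, SubC j t 1}" using nbr_SubC0 by blast
      qed
      have "Dg x \<le> card {Cyc j t, SubC j t 1}" using Dg_le[OF _ sub] by simp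
      thus ?thesis using card2[of "Cyc j t" "SubC j t 1"] by linarith
    next
      case False hence s1: "s = 1" using sc by simp
      have sub: "{y. {x,y} \<in> E} \<subseteq> {SubC j t 0, Cyc j ((t+1) mod d j)}"
      proof
        fix y assume "y \<in> {y. {x,y} \<in> E}"
        hence "{SubC j t 1, y} \<in> E" using sc(1) s1 by simp
        thus "y \<in> {SubC j t 0, Cyc j ((t+1) mod d j)}" using nbr_SubC1 by blast
      qed
      have "Dg x \<le> card {SubC j t 0, Cyc j ((t+1) mod d j)}" using Dg_le[OF _ sub] by simp
      thus ?thesis using card2[of "SubC j t 0" "Cyc j ((t+1) mod d j)"] by linarith
    qed
    thus ?thesis by simp
  next
    case sa
    have "Dg x \<le> 2"
    proof (cases "s = 0")
      case True
      have sub: "{y. {x,y} \<in> E} \<subseteq> {Apex, SubA j t 1}"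
      proof
        fix y assume "y \<in> {y. {x,y} \<in> E}"
        hence "{SubA j t 0, y} \<in> E" using sa(1) True by simp
        thus "y \<in> {Apex, SubA j t 1}" using nbr_SubA0 by blast
      qed
      have "Dg x \<le> card {Apex, SubA j t 1}" using Dg_le[OF _ sub] by simp
      thus ?thesis using card2[of "Apex" "SubA j t 1"] by linarith
    next
      case False hence s1: "s = 1" using sa by simp
      have sub: "{y. {x,y} \<in> E} \<subseteq> {SubA j t 0, Cyc j t}"
      proof
        fix y assume "y \<in> {y. {x,y} \<in> E}"
        hence "{SubA j t 1, y} \<in> E" using sa(1) s1 by simp
        thus "y \<in> {SubA j t 0, Cyc j t}" using nbr_SubA1 by blast
      qed
      have "Dg x \<le> card {SubA j t 0, Cyc j t}" using Dg_le[OF _ sub] by simp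
      thus ?thesis using card2[of "SubA j t 0" "Cyc j t"] by linarith
    qed
    thus ?thesis by simp
  next
    case tr
    have jp: "j < p" using cl_p tr by blast
    obtain t0 where t0: "t0 < d j" "ord j t0 = i" using ord_surj tr by blast
    let ?N = "insert (Cyc j t0) (Tri i ` (cl i - {j}))"
    have fc3: "card (cl i) = 3" using clauses tr by blast
    have fc: "finite (cl i)" "card (cl i) = 3" using fc3 card.infinite by force+
    have sub: "{y. {x,y} \<in> E} \<subseteq> ?N"
    proof
      fix y assume "y \<in> {y. {x,y} \<in> E}"
      hence "(\<exists>k. k \<in> cl i \<and> k \<noteq> j \<and> y = Tri i k) \<or> (\<exists>t. t < d j \<and> ord j t = i \<and> y = Cyc j t)"
        using nbr_Tri tr by blast
      thus "y \<in> ?N"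
      proof (elim disjE exE conjE)
        fix t assume "t < d j" "ord j t = i" "y = Cyc j t"
        hence "t = t0" using ord_inj[OF jp _ t0(1)] t0(2) by simp
        thus "y \<in> ?N" using \<open>y = Cyc j t\<close> by simp
      qed blast
    qed
    have "card ?N \<le> Suc (card (Tri i ` (cl i - {j})))" using fc(1) by (simp add: card_insert_if)
    also have "card (Tri i ` (cl i - {j})) \<le> card (cl i - {j})" using fc by (simp add: card_image_le)
    also have "card (cl i - {j}) = 2" using fc tr by simp
    finally have "card ?N \<le> 3" by simp
    moreover have "Dg x \<le> card ?N" using Dg_le[OF _ sub] fc by simp
    ultimately show ?thesis using tr by simp
  qed
qed

lemma opp_dist: "e \<in> EH \<Longrightarrow> h \<in> e \<Longrightarrow> i < length (opp h e) \<Longrightarrow> k < length (opp h e) \<Longrightarrow> i \<noteq> k \<Longrightarrow>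
   opp h e ! i \<noteq> opp h e ! k"
  using op_basic(3)[of e h] nth_eq_iff_index_eq by blast

lemma opp_last: "e \<in> EH \<Longrightarrow> h \<in> e \<Longrightarrow> last (opp h e) = opp h e ! (length (opp h e) - 1)"
  using opp_ne last_conv_nth by blast

lemma grp_lt: "x \<in> V \<Longrightarrow> x \<noteq> Apex \<Longrightarrow> grp ord x < m"
proof -
  assume xV: "x \<in> V" and xa: "x \<noteq> Apex"
  then consider (c) j t where "x = Cyc j t" "j < p" "t < d j"
    | (sc) j t s where "x = SubC j t s" "j < p" "t < d j"
    | (sa) j t s where "x = SubA j t s" "j < p" "t < d j"
    | (tr) i j where "x = Tri i j" "i < m" "j \<in> cl i"
    using Vcases[OF xV] by blast
  thus ?thesis
  proof cases
    case c thus ?thesis using ord_lt by simp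
  next
    case sc thus ?thesis using ord_lt by simp
  next
    case sa thus ?thesis using ord_lt by simp
  next
    case tr thus ?thesis by simp
  qed
qed

lemma apex_path:
  assumes e: "e \<in> EH" "h \<in> e" and ha: "\<phi> h = Apex"
  shows "\<exists>j t. j < p \<and> t < d j \<and> nb h e = SubA j t 0 \<and> last (opp h e) \<in> {SubA j t 0, SubA j t 1, Cyc j t}"
proof -
  let ?xs = "opp h e"
  have l: "2 \<le> length ?xs" "length ?xs \<le> 4" using op_basic[OF e] by auto
  have x0: "?xs ! 0 = Apex" using opp0[OF e] ha by simp
  have "{?xs ! 0, ?xs ! 1} \<in> E" using op_edge[OF e, of 0] l by simp
  then obtain j t where jt: "j < p" "t < d j" "?xs ! 1 = SubA j t 0" using nbr_Apex x0 by fastforce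
  have "last ?xs \<in> {SubA j t 0, SubA j t 1, Cyc j t}"
  proof (cases "length ?xs = 2")
    case True thus ?thesis using opp_last[OF e] jt by simp
  next
    case False
    have "{?xs ! 1, ?xs ! 2} \<in> E" using op_edge[OF e, of 1] l False by (simp add: numeral_2_eq_2)
    hence "{SubA j t 0, ?xs ! 2} \<in> E" using jt(3) by simp
    hence "?xs ! 2 = Apex \<or> ?xs ! 2 = SubA j t 1" by (rule nbr_SubA0)
    moreover have "?xs ! 2 \<noteq> ?xs ! 0"
    proof -
      have "2 < length ?xs" using l False by linarith
      thus ?thesis using opp_dist[OF e, of 2 0] opp_ne[OF e] by simp
    qed
    ultimately have x2: "?xs ! 2 = SubA j t 1" using x0 by simp
    show ?thesis
    proof (cases "length ?xs = 3")
      case True thus ?thesis using opp_last[OF e] x2 by simp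
    next
      case False
      hence l4: "length ?xs = 4" using l \<open>length ?xs \<noteq> 2\<close> by simp
      have "{?xs ! 2, ?xs ! 3} \<in> E" using op_edge[OF e, of 2] l4 by (simp add: numeral_2_eq_2 numeral_3_eq_3)
      hence "{SubA j t 1, ?xs ! 3} \<in> E" using x2 by simp
      hence "?xs ! 3 = SubA j t 0 \<or> ?xs ! 3 = Cyc j t" by (rule nbr_SubA1)
      moreover have "?xs ! 3 \<noteq> ?xs ! 1"
      proof -
        have "3 < length ?xs" "1 < length ?xs" using l4 by linarith+
        thus ?thesis using opp_dist[OF e, of 3 1] by simp
      qed
      ultimately have "?xs ! 3 = Cyc j t" using jt(3) by simp
      thus ?thesis using opp_last[OF e] l4 by simp
    qed
  qed
  thus ?thesis using jt unfolding nb_def by blast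
qed

definition ag :: "'h set \<times> 'h \<Rightarrow> nat" where
  "ag \<iota> = (if \<phi> (snd \<iota>) = Apex then grp ord (nbi \<iota>) else grp ord (\<phi> (snd \<iota>)))"

definition X :: "nat \<Rightarrow> gvert set" where "X i = {x \<in> B. x \<noteq> Apex \<and> grp ord x = i}"
definition Ap :: "nat \<Rightarrow> ('h set \<times> 'h) set" where
  "Ap i = {\<iota> \<in> I. \<phi> (snd \<iota>) = Apex \<and> grp ord (nbi \<iota>) = i}"
definition F :: "nat \<Rightarrow> ('h set \<times> 'h) set" where "F i = {\<iota> \<in> I. ag \<iota> = i}"

lemma finB: "finite B" using finVH by simp
lemma finX: "finite (X i)" unfolding X_def using finB by simp

lemma ag_lt: "\<iota> \<in> I \<Longrightarrow> ag \<iota> < m"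
proof -
  assume a: "\<iota> \<in> I"
  obtain e h where eh: "\<iota> = (e,h)" by (cases \<iota>)
  have e: "e \<in> EH" "h \<in> e" "h \<in> VH" using I_mem[OF a] eh by auto
  show ?thesis
  proof (cases "\<phi> h = Apex")
    case True
    then obtain j t where "j < p" "t < d j" "nb h e = SubA j t 0" using apex_path[OF e(1,2)] by blast
    thus ?thesis using True eh ord_lt unfolding ag_def nbi_def by simp
  next
    case False
    have "\<phi> h \<in> V" using e(3) phiV by blast
    thus ?thesis using False eh grp_lt unfolding ag_def by simp
  qed
qed

lemma F_le: "card (F i) \<le> card (Ap i) + (\<Sum>x\<in>X i. Dg x)"
proof -
  have "F i \<subseteq> Ap i \<union> (\<Union>x\<in>X i. fiber x)"
  proof
    fix \<iota> assume a: "\<iota> \<in> F i"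
    hence iI: "\<iota> \<in> I" "ag \<iota> = i" unfolding F_def by auto
    show "\<iota> \<in> Ap i \<union> (\<Union>x\<in>X i. fiber x)"
    proof (cases "\<phi> (snd \<iota>) = Apex")
      case True thus ?thesis using iI unfolding Ap_def ag_def by simp
    next
      case False
      have "\<phi> (snd \<iota>) \<in> X i" using False iI I_mem[OF iI(1)] unfolding X_def ag_def by auto
      moreover have "\<iota> \<in> fiber (\<phi> (snd \<iota>))" using iI unfolding fiber_def by simp
      ultimately show ?thesis by blast
    qed
  qed
  moreover have "Ap i \<union> (\<Union>x\<in>X i. fiber x) \<subseteq> I" unfolding Ap_def fiber_def by auto
  ultimately have "card (F i) \<le> card (Ap i \<union> (\<Union>x\<in>X i. fiber x))"
    using finI by (meson card_mono finite_subset)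
  also have "\<dots> \<le> card (Ap i) + card (\<Union>x\<in>X i. fiber x)" by (rule card_Un_le)
  also have "card (\<Union>x\<in>X i. fiber x) \<le> (\<Sum>x\<in>X i. card (fiber x))" using finX by (rule card_UN_le)
  finally show ?thesis unfolding Dg_def by simp
qed

lemma Ap_le_n: "card (Ap i) \<le> card (X i)"
proof (rule card_inj_on_le[of "\<lambda>\<iota>. last (opp (snd \<iota>) (fst \<iota>))"])
  show "finite (X i)" by (rule finX)
  show "inj_on (\<lambda>\<iota>. last (opp (snd \<iota>) (fst \<iota>))) (Ap i)"
  proof (rule inj_onI)
    fix a b assume a: "a \<in> Ap i" "b \<in> Ap i" "last (opp (snd a) (fst a)) = last (opp (snd b) (fst b))"
    obtain e h where ab: "a = (e,h)" by (cases a)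
    obtain e' h' where bb: "b = (e',h')" by (cases b)
    have ia: "e \<in> EH" "h \<in> e" "h \<in> VH" "\<phi> h = Apex" using a(1) I_mem[of a] ab unfolding Ap_def by auto
    have ib: "e' \<in> EH" "h' \<in> e'" "h' \<in> VH" "\<phi> h' = Apex" using a(2) I_mem[of b] bb unfolding Ap_def by auto
    have hh: "h = h'" using inj_onD[OF phi_inj _ ia(3) ib(3)] ia(4) ib(4) by simp
    obtain h2 where h2: "h2 \<in> VH" "e = {h,h2}" "last (opp h e) = \<phi> h2" using op_ends[OF ia(1,2)] by blast
    obtain h3 where h3: "h3 \<in> VH" "e' = {h',h3}" "last (opp h' e') = \<phi> h3" using op_ends[OF ib(1,2)] by blast
    have "\<phi> h2 = \<phi> h3" using a(3) ab bb h2 h3 by simp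
    hence "h2 = h3" using inj_onD[OF phi_inj _ h2(1) h3(1)] by blast
    thus "a = b" using ab bb hh h2 h3 by simp
  qed
  show "(\<lambda>\<iota>. last (opp (snd \<iota>) (fst \<iota>))) ` Ap i \<subseteq> X i"
  proof
    fix y assume "y \<in> (\<lambda>\<iota>. last (opp (snd \<iota>) (fst \<iota>))) ` Ap i"
    then obtain \<iota> where y: "\<iota> \<in> Ap i" "y = last (opp (snd \<iota>) (fst \<iota>))" by blast
    obtain e h where ab: "\<iota> = (e,h)" by (cases \<iota>)
    have ia: "e \<in> EH" "h \<in> e" "\<phi> h = Apex" "grp ord (nb h e) = i" using y(1) I_mem[of \<iota>] ab unfolding Ap_def nbi_def by auto
    obtain j t where jt: "j < p" "t < d j" "nb h e = SubA j t 0" "last (opp h e) \<in> {SubA j t 0, SubA j t 1, Cyc j t}"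
      using apex_path[OF ia(1,2,3)] by blast
    have yy: "y \<in> {SubA j t 0, SubA j t 1, Cyc j t}" using jt(4) y(2) ab by simp
    hence "grp ord y = ord j t" "y \<noteq> Apex" by auto
    moreover have "ord j t = i" using ia(4) jt(3) by simp
    moreover have "y \<in> B" using last_B[OF ia(1,2)] y(2) ab by simp
    ultimately show "y \<in> X i" unfolding X_def by auto
  qed
qed

lemma Ap_le_3: "i < m \<Longrightarrow> card (Ap i) \<le> 3"
proof -
  assume im: "i < m"
  have "card (Ap i) \<le> card (cl i)"
  proof (rule card_inj_on_le[of "\<lambda>\<iota>. vj (nbi \<iota>)"])
    show "finite (cl i)" using clauses im card.infinite by force
    have key: "\<And>\<iota>. \<iota> \<in> Ap i \<Longrightarrow> \<exists>j t. j < p \<and> t < d j \<and> nbi \<iota> = SubA j t 0 \<and> ord j t = i"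
    proof -
      fix \<iota> assume a: "\<iota> \<in> Ap i"
      obtain e h where ab: "\<iota> = (e,h)" by (cases \<iota>)
      have ia: "e \<in> EH" "h \<in> e" "\<phi> h = Apex" "grp ord (nb h e) = i" using a I_mem[of \<iota>] ab unfolding Ap_def nbi_def by auto
      obtain j t where "j < p" "t < d j" "nb h e = SubA j t 0" using apex_path[OF ia(1,2,3)] by blast
      thus "\<exists>j t. j < p \<and> t < d j \<and> nbi \<iota> = SubA j t 0 \<and> ord j t = i" using ia(4) ab unfolding nbi_def by auto
    qed
    show "inj_on (\<lambda>\<iota>. vj (nbi \<iota>)) (Ap i)"
    proof (rule inj_onI)
      fix a b assume a: "a \<in> Ap i" "b \<in> Ap i" "vj (nbi a) = vj (nbi b)"
      obtain j t where jt: "j < p" "t < d j" "nbi a = SubA j t 0" "ord j t = i" using key[OF a(1)] by blast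
      obtain j' t' where jt': "j' < p" "t' < d j'" "nbi b = SubA j' t' 0" "ord j' t' = i" using key[OF a(2)] by blast
      have jj: "j = j'" using a(3) jt jt' by simp
      hence "t = t'" using ord_inj[OF jt(1,2)] jt' jt(4) by simp
      hence nbeq: "nbi a = nbi b" using jt jt' jj by simp
      obtain e h where ab: "a = (e,h)" by (cases a)
      obtain e' h' where bb: "b = (e',h')" by (cases b)
      have ia: "e \<in> EH" "h \<in> e" "h \<in> VH" "\<phi> h = Apex" using a(1) I_mem[of a] ab unfolding Ap_def by auto
      have ib: "e' \<in> EH" "h' \<in> e'" "h' \<in> VH" "\<phi> h' = Apex" using a(2) I_mem[of b] bb unfolding Ap_def by auto
      have hh: "h = h'" using inj_onD[OF phi_inj _ ia(3) ib(3)] ia(4) ib(4) by simp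
      hence "e = e'" using nb_inj[OF ia(1,2)] ib(1,2) nbeq ab bb unfolding nbi_def by simp
      thus "a = b" using ab bb hh by simp
    qed
    show "(\<lambda>\<iota>. vj (nbi \<iota>)) ` Ap i \<subseteq> cl i"
    proof
      fix y assume "y \<in> (\<lambda>\<iota>. vj (nbi \<iota>)) ` Ap i"
      then obtain \<iota> where y: "\<iota> \<in> Ap i" "y = vj (nbi \<iota>)" by blast
      obtain j t where jt: "j < p" "t < d j" "nbi \<iota> = SubA j t 0" "ord j t = i" using key[OF y(1)] by blast
      thus "y \<in> cl i" using ord_lt[OF jt(1,2)] y(2) by simp
    qed
  qed
  thus ?thesis using clauses im by simp
qed

lemma cyc_full: "Cyc j t \<in> B \<Longrightarrow> Dg (Cyc j t) = 4 \<Longrightarrow> y \<in> NCyc j t \<Longrightarrow> \<exists>\<iota>\<in>fiber (Cyc j t). nbi \<iota> = y"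
  using Dg_full[OF NCyc(2) NCyc(1)] NCyc(3)[of j t] by simp

lemma tri_step:
  assumes i: "i < m" "j \<in> cl i" "t < d j" "ord j t = i"
    and io: "\<iota> \<in> fiber (Cyc j t)" "nbi \<iota> = Tri i j" and nt: "\<forall>k\<in>cl i. Tri i k \<notin> B"
  shows "\<exists>e\<in>EH. Tri i j \<in> inner (P e) \<and> (\<exists>k\<in>cl i. k \<noteq> j \<and> Tri i k \<in> inner (P e))"
proof -
  obtain e h where ab: "\<iota> = (e,h)" by (cases \<iota>)
  have e: "e \<in> EH" "h \<in> e" "\<phi> h = Cyc j t" using io(1) I_mem[of \<iota>] ab unfolding fiber_def by auto
  let ?xs = "opp h e"
  have l: "2 \<le> length ?xs" "length ?xs \<le> 4" using op_basic[OF e(1,2)] by auto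
  have x0: "?xs ! 0 = Cyc j t" using opp0[OF e(1,2)] e(3) by simp
  have x1: "?xs ! 1 = Tri i j" using io(2) ab unfolding nbi_def nb_def by simp
  have x1B: "?xs ! 1 \<notin> B" using x1 nt i(2) by simp
  have s1: "Suc 1 < length ?xs" using notB_next[OF e(1,2), of 1] x1B l by simp
  have in1: "Tri i j \<in> inner (P e)" using inner_notB[OF e(1,2), of 1] s1 x1 by simp
  have "{?xs ! 1, ?xs ! Suc 1} \<in> E" using op_edge[OF e(1,2) s1] .
  hence "{Tri i j, ?xs ! 2} \<in> E" using x1 by (simp add: numeral_2_eq_2)
  hence "(\<exists>k. k \<in> cl i \<and> k \<noteq> j \<and> ?xs ! 2 = Tri i k) \<or> (\<exists>t'. t' < d j \<and> ord j t' = i \<and> ?xs ! 2 = Cyc j t')"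
    by (rule nbr_Tri)
  moreover have "?xs ! 2 \<noteq> ?xs ! 0" using opp_dist[OF e(1,2), of 2 0] s1 opp_ne[OF e(1,2)] by (simp add: numeral_2_eq_2)
  moreover have jp: "j < p" using cl_p i by blast
  ultimately obtain k where k: "k \<in> cl i" "k \<noteq> j" "?xs ! 2 = Tri i k"
    using x0 ord_inj[OF jp _ i(3)] i(4) by auto
  have s2: "Suc 2 < length ?xs" using notB_next[OF e(1,2), of 2] k nt s1 by (simp add: numeral_2_eq_2)
  have "Tri i k \<in> inner (P e)" using inner_notB[OF e(1,2), of 2] s2 k(3) by simp
  thus ?thesis using in1 k e(1) by blast
qed

end

lemma tri_comb:
  fixes T :: "nat \<Rightarrow> 'b" and inn :: "'e \<Rightarrow> 'b set"
  assumes C: "card C = 3" and T: "inj_on T C"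
    and ex: "\<forall>j\<in>C. \<exists>e\<in>EE. T j \<in> inn e \<and> (\<exists>k\<in>C. k \<noteq> j \<and> T k \<in> inn e)"
    and small: "\<forall>e\<in>EE. finite (inn e) \<and> card (inn e) \<le> 2"
    and dj: "\<forall>e\<in>EE. \<forall>e'\<in>EE. e \<noteq> e' \<longrightarrow> inn e \<inter> inn e' = {}"
  shows False
proof -
  have fC: "finite C" using C card.infinite by force
  obtain j where j: "j \<in> C" using C by fastforce
  obtain e k where ek: "e \<in> EE" "T j \<in> inn e" "k \<in> C" "k \<noteq> j" "T k \<in> inn e" using ex j by blast
  have "card {j,k} = 2" using ek by simp
  have "\<not> C \<subseteq> {j,k}"
  proof
    assume "C \<subseteq> {j,k}"
    hence "card C \<le> card {j,k}" by (intro card_mono) simp_all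
    thus False using C \<open>card {j,k} = 2\<close> by simp
  qed
  then obtain l where l: "l \<in> C" "l \<noteq> j" "l \<noteq> k" by blast
  have Cjkl: "C = {j,k,l}"
  proof -
    have "{j,k,l} \<subseteq> C" using j ek l by blast
    moreover have "card {j,k,l} = 3" using ek l by simp
    ultimately show ?thesis using card_seteq[OF fC, of "{j,k,l}"] C by simp
  qed
  obtain e' k' where ek': "e' \<in> EE" "T l \<in> inn e'" "k' \<in> C" "k' \<noteq> l" "T k' \<in> inn e'" using ex l by blast
  have "k' = j \<or> k' = k" using Cjkl ek' by blast
  hence "e' = e" using ek ek' dj by blast
  hence "{T j, T k, T l} \<subseteq> inn e" using ek ek' by blast
  moreover have "card {T j, T k, T l} = 3"
  proof -
    have "T j \<noteq> T k" using inj_onD[OF T _ j ek(3)] ek(4) by blast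
    moreover have "T j \<noteq> T l" using inj_onD[OF T _ j l(1)] l(2) by blast
    moreover have "T k \<noteq> T l" using inj_onD[OF T _ ek(3) l(1)] l(3) by blast
    ultimately show ?thesis by simp
  qed
  ultimately have "card {T j, T k, T l} \<le> card (inn e)" using small ek(1) by (intro card_mono) simp_all
  hence "3 \<le> card (inn e)" using \<open>card {T j, T k, T l} = 3\<close> by simp
  moreover have "card (inn e) \<le> 2" using small ek(1) by blast
  ultimately show False by simp
qed

context L begin

lemma no_full_clause:
  assumes i: "i < m" and nt: "\<forall>k\<in>cl i. Tri i k \<notin> B"
    and full: "\<forall>j\<in>cl i. \<exists>t<d j. ord j t = i \<and> Cyc j t \<in> B \<and> Dg (Cyc j t) = 4"
  shows False
proof (rule tri_comb[of "cl i" "Tri i" EH "\<lambda>e. inner (P e)"])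
  show "card (cl i) = 3" using clauses i by simp
  show "inj_on (Tri i) (cl i)" by (simp add: inj_on_def)
  show "\<forall>j\<in>cl i. \<exists>e\<in>EH. Tri i j \<in> inner (P e) \<and> (\<exists>k\<in>cl i. k \<noteq> j \<and> Tri i k \<in> inner (P e))"
  proof
    fix j assume j: "j \<in> cl i"
    obtain t where t: "t < d j" "ord j t = i" "Cyc j t \<in> B" "Dg (Cyc j t) = 4" using full j by blast
    have "Tri i j \<in> NCyc j t" unfolding NCyc_def using t(2) by simp
    then obtain \<iota> where "\<iota> \<in> fiber (Cyc j t)" "nbi \<iota> = Tri i j" using cyc_full t by blast
    thus "\<exists>e\<in>EH. Tri i j \<in> inner (P e) \<and> (\<exists>k\<in>cl i. k \<noteq> j \<and> Tri i k \<in> inner (P e))"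
      using tri_step[OF i j t(1,2) _ _ nt] by blast
  qed
  show "\<forall>e\<in>EH. finite (inner (P e)) \<and> card (inner (P e)) \<le> 2"
  proof
    fix e assume "e \<in> EH"
    hence "length (P e) \<le> 4" using pth by blast
    thus "finite (inner (P e)) \<and> card (inner (P e)) \<le> 2" using inner_card[of "P e"] unfolding inner_def by simp
  qed
  show "\<forall>e\<in>EH. \<forall>e'\<in>EH. e \<noteq> e' \<longrightarrow> inner (P e) \<inter> inner (P e') = {}" using dsj .
qed

end

lemma ar1: "(n::nat) \<le> 2 \<Longrightarrow> 1 \<le> n \<Longrightarrow> f + 1 \<le> 5 * n \<Longrightarrow> (2*m+1) * f < 10 + 10 * m * n"
proof -
  assume a: "n \<le> 2" "1 \<le> n" "f + 1 \<le> 5 * n"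
  have "n = 1 \<or> n = 2" using a by arith
  thus ?thesis
  proof
    assume n: "n = 1"
    hence "f \<le> 4" using a by simp
    hence "(2*m+1) * f \<le> (2*m+1) * 4" by (rule mult_le_mono2)
    thus ?thesis using n by simp
  next
    assume n: "n = 2"
    hence "f \<le> 9" using a by simp
    hence "(2*m+1) * f \<le> (2*m+1) * 9" by (rule mult_le_mono2)
    thus ?thesis using n by simp
  qed
qed

lemma ar2: "(m::nat) \<ge> 3 \<Longrightarrow> n \<ge> 3 \<Longrightarrow> f \<le> 4 * n + 2 \<Longrightarrow> (2*m+1) * f < 10 + 10 * m * n"
proof -
  assume a: "m \<ge> 3" "n \<ge> 3" "f \<le> 4 * n + 2"
  obtain a' where m: "m = a' + 3" using a(1) by (metis le_add_diff_inverse2)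
  obtain b where n: "n = b + 3" using a(2) by (metis le_add_diff_inverse2)
  have "(2*m+1) * f \<le> (2*m+1) * (4*n+2)" using a(3) by (rule mult_le_mono2)
  also have "(2*m+1) * (4*n+2) < 10 + 10 * m * n" unfolding m n by (simp add: algebra_simps)
  finally show ?thesis .
qed

lemma ar3: "(n::nat) \<le> 2 \<Longrightarrow> f \<le> 5 * n \<Longrightarrow> (2*m+1) * f \<le> 10 + 10 * m * n \<and> ((2*m+1) * f = 10 + 10 * m * n \<longrightarrow> n = 2)"
proof -
  assume a: "n \<le> 2" "f \<le> 5 * n"
  have h: "(2*m+1) * f \<le> (2*m+1) * (5*n)" using a(2) by (rule mult_le_mono2)
  have "n = 0 \<or> n = 1 \<or> n = 2" using a by arith
  thus ?thesis
  proof (elim disjE)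
    assume "n = 0" thus ?thesis using h by simp
  next
    assume "n = 1" thus ?thesis using h by simp
  next
    assume "n = 2" thus ?thesis using h by simp
  qed
qed

context L begin

lemma clause_bound:
  assumes i: "i < m" and m3: "3 \<le> m"
  shows "(2*m+1) * card (F i) \<le> 10 + 10 * m * card (X i) \<and>
    ((2*m+1) * card (F i) = 10 + 10 * m * card (X i) \<longrightarrow> card (X i) = 2 \<and> (\<forall>x\<in>X i. is_cyc x \<and> Dg x = 4))"
proof -
  let ?n = "card (X i)" and ?f = "card (F i)" and ?a = "card (Ap i)" and ?S = "\<Sum>x\<in>X i. Dg x"
  have f: "?f \<le> ?a + ?S" by (rule F_le)
  have an: "?a \<le> ?n" by (rule Ap_le_n)
  have a3: "?a \<le> 3" using Ap_le_3 i by simp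
  have XB: "\<And>x. x \<in> X i \<Longrightarrow> x \<in> B \<and> x \<noteq> Apex" unfolding X_def by auto
  have D4: "\<And>x. x \<in> X i \<Longrightarrow> Dg x \<le> 4"
  proof -
    fix x assume "x \<in> X i"
    hence "x \<in> B" "x \<noteq> Apex" using XB by auto
    thus "Dg x \<le> 4" using Dg_bound by blast
  qed
  have S4: "?S \<le> 4 * ?n" using sum_bounded_above[of "X i" Dg 4] D4 by simp
  show ?thesis
  proof (cases "\<exists>x\<in>X i. \<not> (is_cyc x \<and> Dg x = 4)")
    case True
    then obtain x where x: "x \<in> X i" "\<not> (is_cyc x \<and> Dg x = 4)" by blast
    have xb: "x \<in> B" "x \<noteq> Apex" using XB[OF x(1)] by auto
    have Dx: "Dg x \<le> 3"
    proof (cases "is_cyc x")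
      case True thus ?thesis using x(2) Dg_bound[OF xb] by simp
    next
      case False thus ?thesis using Dg_bound[OF xb] by simp
    qed
    have n1: "1 \<le> ?n" using finX x(1) by (metis One_nat_def Suc_leI card_gt_0_iff empty_iff)
    have s1: "?S = Dg x + (\<Sum>y\<in>X i - {x}. Dg y)" using finX x(1) by (simp add: sum.remove)
    have s2: "(\<Sum>y\<in>X i - {x}. Dg y) \<le> 4 * card (X i - {x})"
      using sum_bounded_above[of "X i - {x}" Dg 4] D4 by simp
    have s3: "card (X i - {x}) + 1 = ?n" using finX x(1) n1 by simp
    have S: "?S + 1 \<le> 4 * ?n" using s1 s2 s3 Dx by linarith
    have "(2*m+1) * ?f < 10 + 10 * m * ?n"
    proof (cases "?n \<le> 2")
      case True
      have "?f + 1 \<le> 5 * ?n" using f an S by linarith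
      thus ?thesis using ar1[OF True n1] by blast
    next
      case False
      have f4: "?f \<le> 4 * ?n + 2" using f a3 S by linarith
      have "3 \<le> ?n" using False by simp
      thus ?thesis using ar2[OF m3 _ f4] by simp
    qed
    thus ?thesis by simp
  next
    case False
    hence allc: "\<forall>x\<in>X i. is_cyc x \<and> Dg x = 4" by blast
    show ?thesis
    proof (cases "?n \<le> 2")
      case True
      have f5: "?f \<le> 5 * ?n" using f an S4 by linarith
      have r: "(2*m+1) * ?f \<le> 10 + 10 * m * ?n \<and> ((2*m+1) * ?f = 10 + 10 * m * ?n \<longrightarrow> ?n = 2)"
        by (rule ar3[OF True f5])
      show ?thesis
      proof (intro conjI impI)
        show "(2*m+1) * ?f \<le> 10 + 10 * m * ?n" using r by (rule conjunct1)
        assume "(2*m+1) * ?f = 10 + 10 * m * ?n"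
        thus "?n = 2" using r by (rule_tac mp[OF conjunct2[OF r]])
        show "\<forall>x\<in>X i. is_cyc x \<and> Dg x = 4" by (rule allc)
      qed
    next
      case False
      have nt: "\<forall>k\<in>cl i. Tri i k \<notin> B"
      proof (intro ballI notI)
        fix k assume "k \<in> cl i" "Tri i k \<in> B"
        hence "Tri i k \<in> X i" unfolding X_def by simp
        hence "is_cyc (Tri i k)" using allc by blast
        thus False by simp
      qed
      have Xc: "\<And>x. x \<in> X i \<Longrightarrow> \<exists>j t. x = Cyc j t \<and> j < p \<and> t < d j \<and> ord j t = i \<and> j \<in> cl i"
      proof -
        fix x assume x: "x \<in> X i"
        have "is_cyc x" using allc x by blast
        then obtain j t where jt: "x = Cyc j t" by (cases x) auto
        have "x \<in> V" using XB[OF x] phiV by blast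
        hence jp: "j < p" "t < d j" using jt by (simp_all add: G_verts_def)
        have o: "ord j t = i" using x jt unfolding X_def by simp
        have "j \<in> cl i" using ord_lt[OF jp] o by simp
        thus "\<exists>j t. x = Cyc j t \<and> j < p \<and> t < d j \<and> ord j t = i \<and> j \<in> cl i"
          using jt jp o by blast
      qed
      have inj: "inj_on vj (X i)"
      proof (rule inj_onI)
        fix x y assume xy: "x \<in> X i" "y \<in> X i" "vj x = vj y"
        obtain j t where jt: "x = Cyc j t" "j < p" "t < d j" "ord j t = i" using Xc[OF xy(1)] by blast
        obtain j' t' where jt': "y = Cyc j' t'" "j' < p" "t' < d j'" "ord j' t' = i" using Xc[OF xy(2)] by blast
        have jj: "j' = j" using xy(3) jt jt' by simp
        have t1: "t' < d j" using jt'(3) jj by simp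
        have t2: "ord j t = ord j t'" using jt(4) jt'(4) jj by simp
        have "t = t'" using ord_inj[OF jt(2,3) t1 t2] .
        thus "x = y" using jt(1) jt'(1) jj by simp
      qed
      have sub: "vj ` X i \<subseteq> cl i"
      proof
        fix y assume "y \<in> vj ` X i"
        then obtain x where x: "x \<in> X i" "y = vj x" by blast
        obtain j t where jt: "x = Cyc j t" "j \<in> cl i" using Xc[OF x(1)] by blast
        show "y \<in> cl i" using x(2) jt by simp
      qed
      have c3: "card (cl i) = 3" using clauses i by simp
      hence "0 < card (cl i)" by simp
      hence fcl: "finite (cl i)" by (simp add: card_gt_0_iff)
      have "card (vj ` X i) = ?n" using inj by (simp add: card_image)
      moreover have "card (cl i) = 3" using clauses i by simp
      ultimately have eq: "vj ` X i = cl i" using card_seteq[OF fcl sub] False by simp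
      have "\<forall>j\<in>cl i. \<exists>t<d j. ord j t = i \<and> Cyc j t \<in> B \<and> Dg (Cyc j t) = 4"
      proof
        fix j assume "j \<in> cl i"
        then obtain x where x: "x \<in> X i" "vj x = j" using eq by force
        obtain j' t where jt: "x = Cyc j' t" "j' < p" "t < d j'" "ord j' t = i" using Xc[OF x(1)] by blast
        have jj: "j' = j" using x(2) jt(1) by simp
        have "Cyc j t \<in> B" "Dg (Cyc j t) = 4" using allc x(1) XB[OF x(1)] jt(1) jj by auto
        thus "\<exists>t<d j. ord j t = i \<and> Cyc j t \<in> B \<and> Dg (Cyc j t) = 4"
          using jt jj by blast
      qed
      hence False using no_full_clause[OF i nt] by blast
      thus ?thesis by blast
    qed
  qed
qed

lemma X_cyc: "x \<in> X i \<Longrightarrow> is_cyc x \<Longrightarrow> \<exists>j t. x = Cyc j t \<and> j < p \<and> t < d j \<and> ord j t = i \<and> j \<in> cl i"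
proof -
  assume x: "x \<in> X i" "is_cyc x"
  then obtain j t where jt: "x = Cyc j t" by (cases x) auto
  have "x \<in> V" using x(1) phiV unfolding X_def by blast
  hence jp: "j < p" "t < d j" using jt by (simp_all add: G_verts_def)
  have o: "ord j t = i" using x jt unfolding X_def by simp
  have "j \<in> cl i" using ord_lt[OF jp] o by simp
  thus ?thesis using jt jp o by blast
qed

lemma X_inj: "\<forall>x\<in>X i. is_cyc x \<Longrightarrow> inj_on vj (X i)"
proof (rule inj_onI)
  fix x y assume a: "\<forall>x\<in>X i. is_cyc x" and xy: "x \<in> X i" "y \<in> X i" "vj x = vj y"
  obtain j t where jt: "x = Cyc j t" "j < p" "t < d j" "ord j t = i" using X_cyc[OF xy(1)] a xy(1) by blast
  obtain j' t' where jt': "y = Cyc j' t'" "j' < p" "t' < d j'" "ord j' t' = i" using X_cyc[OF xy(2)] a xy(2) by blast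
  have jj: "j' = j" using xy(3) jt jt' by simp
  have t1: "t' < d j" using jt'(3) jj by simp
  have t2: "ord j t = ord j t'" using jt(4) jt'(4) jj by simp
  have "t = t'" using ord_inj[OF jt(2,3) t1 t2] .
  thus "x = y" using jt(1) jt'(1) jj by simp
qed

lemma closure_step:
  assumes allB: "\<forall>x\<in>B. x \<noteq> Apex \<longrightarrow> is_cyc x \<and> Dg x = 4" and c: "Cyc j t \<in> B"
  shows "Cyc j ((t+1) mod d j) \<in> B"
proof -
  have "Cyc j t \<in> V" using c phiV by blast
  hence jp: "j < p" "t < d j" by (simp_all add: G_verts_def)
  have D: "Dg (Cyc j t) = 4" using allB c by auto
  have "SubC j t 0 \<in> NCyc j t" unfolding NCyc_def by simp
  then obtain \<iota> where io: "\<iota> \<in> fiber (Cyc j t)" "nbi \<iota> = SubC j t 0" using cyc_full[OF c D] by blast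
  obtain e h where ab: "\<iota> = (e,h)" by (cases \<iota>)
  have e: "e \<in> EH" "h \<in> e" "\<phi> h = Cyc j t" using io(1) I_mem[of \<iota>] ab unfolding fiber_def by auto
  let ?xs = "opp h e"
  have l: "2 \<le> length ?xs" "length ?xs \<le> 4" using op_basic[OF e(1,2)] by auto
  have x0: "?xs ! 0 = Cyc j t" using opp0[OF e(1,2)] e(3) by simp
  have x1: "?xs ! 1 = SubC j t 0" using io(2) ab unfolding nbi_def nb_def by simp
  have nB1: "SubC j t 0 \<notin> B" using allB by fastforce
  have nB2: "SubC j t 1 \<notin> B" using allB by fastforce
  have s1: "Suc 1 < length ?xs" using notB_next[OF e(1,2), of 1] x1 nB1 l by simp
  have "{?xs ! 1, ?xs ! Suc 1} \<in> E" using op_edge[OF e(1,2) s1] .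
  hence "{SubC j t 0, ?xs ! 2} \<in> E" using x1 by (simp add: numeral_2_eq_2)
  hence "?xs ! 2 = Cyc j t \<or> ?xs ! 2 = SubC j t 1" by (rule nbr_SubC0)
  moreover have "?xs ! 2 \<noteq> ?xs ! 0" using opp_dist[OF e(1,2), of 2 0] s1 opp_ne[OF e(1,2)] by (simp add: numeral_2_eq_2)
  ultimately have x2: "?xs ! 2 = SubC j t 1" using x0 by simp
  have s2: "Suc 2 < length ?xs" using notB_next[OF e(1,2), of 2] x2 nB2 s1 by (simp add: numeral_2_eq_2)
  hence l4: "length ?xs = 4" using l by simp
  have "{?xs ! 2, ?xs ! Suc 2} \<in> E" using op_edge[OF e(1,2) s2] .
  hence "{SubC j t 1, ?xs ! 3} \<in> E" using x2 by (simp add: numeral_3_eq_3)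
  hence "?xs ! 3 = SubC j t 0 \<or> ?xs ! 3 = Cyc j ((t+1) mod d j)" by (rule nbr_SubC1)
  moreover have "?xs ! 3 \<noteq> ?xs ! 1"
  proof -
    have "3 < length ?xs" "1 < length ?xs" using l4 by linarith+
    thus ?thesis using opp_dist[OF e(1,2), of 3 1] by simp
  qed
  ultimately have x3: "?xs ! 3 = Cyc j ((t+1) mod d j)" using x1 by simp
  have "last ?xs = ?xs ! 3" using opp_last[OF e(1,2)] l4 by simp
  thus ?thesis using last_B[OF e(1,2)] x3 by simp
qed

lemma closure_all:
  assumes allB: "\<forall>x\<in>B. x \<noteq> Apex \<longrightarrow> is_cyc x \<and> Dg x = 4" and c: "Cyc j t \<in> B"
  shows "Cyc j ((t+k) mod d j) \<in> B"
proof (induction k)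
  case 0
  have "Cyc j t \<in> V" using c phiV by blast
  hence "t < d j" by (simp add: G_verts_def)
  thus ?case using c by simp
next
  case (Suc k)
  have "Cyc j (((t+k) mod d j + 1) mod d j) \<in> B" using closure_step[OF allB Suc.IH] .
  moreover have "((t+k) mod d j + 1) mod d j = (t + Suc k) mod d j" by (simp add: mod_Suc_eq)
  ultimately show ?case by simp
qed

lemma cyc_iff:
  assumes allB: "\<forall>x\<in>B. x \<noteq> Apex \<longrightarrow> is_cyc x \<and> Dg x = 4" and t: "t < d j"
  shows "Cyc j t \<in> B \<longleftrightarrow> Cyc j 0 \<in> B"
proof
  assume c: "Cyc j t \<in> B"
  have "Cyc j ((t + (d j - t)) mod d j) \<in> B" using closure_all[OF allB c] .
  thus "Cyc j 0 \<in> B" using t by simp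
next
  assume c: "Cyc j 0 \<in> B"
  have "Cyc j ((0 + t) mod d j) \<in> B" using closure_all[OF allB c] .
  thus "Cyc j t \<in> B" using t by simp
qed

lemma m3: "0 < m \<Longrightarrow> 3 \<le> m"
proof -
  assume m: "0 < m"
  have c0: "cl 0 \<subseteq> {..<p}" "card (cl 0) = 3" using clauses m by auto
  have "card (cl 0) \<le> card {..<p}" using c0(1) by (intro card_mono) simp_all
  hence "0 < p" using c0(2) by simp
  hence "3 \<le> d 0" using occ by simp
  moreover have "d 0 \<le> m"
  proof -
    have "{i. i < m \<and> 0 \<in> cl i} \<subseteq> {..<m}" by auto
    hence "card {i. i < m \<and> 0 \<in> cl i} \<le> card {..<m}" by (intro card_mono) simp_all
    thus ?thesis unfolding deg_def by simp
  qed
  ultimately show ?thesis by simp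
qed

lemma cardB: "card B = card VH" using phi_inj by (simp add: card_image)

lemma I_split: "card I = (\<Sum>x\<in>B. Dg x)"
proof -
  have "(\<Sum>x\<in>B. \<Sum>\<iota>\<in>{\<iota>\<in>I. \<phi> (snd \<iota>) = x}. (1::nat)) = (\<Sum>\<iota>\<in>I. 1)"
    by (rule sum.group[OF finI finB]) (auto dest: I_mem)
  thus ?thesis unfolding Dg_def fiber_def by simp
qed

lemma I_split2: "card I = (\<Sum>i<m. card (F i))"
proof -
  have "(\<Sum>i\<in>{..<m}. \<Sum>\<iota>\<in>{\<iota>\<in>I. ag \<iota> = i}. (1::nat)) = (\<Sum>\<iota>\<in>I. 1)"
    by (rule sum.group[OF finI]) (auto dest: ag_lt)
  thus ?thesis unfolding F_def by simp
qed

lemma B_split: "Apex \<in> B \<Longrightarrow> card B = 1 + (\<Sum>i<m. card (X i))"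
proof -
  assume a: "Apex \<in> B"
  have "(\<Sum>i\<in>{..<m}. \<Sum>x\<in>{x\<in>B - {Apex}. grp ord x = i}. (1::nat)) = (\<Sum>x\<in>B - {Apex}. 1)"
  proof (rule sum.group)
    show "finite (B - {Apex})" using finB by simp
    show "grp ord ` (B - {Apex}) \<subseteq> {..<m}" using grp_lt phiV by blast
  qed simp
  moreover have "\<And>i. {x\<in>B - {Apex}. grp ord x = i} = X i" unfolding X_def by auto
  ultimately have "(\<Sum>i<m. card (X i)) = card (B - {Apex})" by simp
  also have "\<dots> = card B - 1" using a finB by simp
  finally show ?thesis using a finB by (metis card_gt_0_iff empty_iff add.commute le_add_diff_inverse2 Suc_leI One_nat_def)
qed

lemma main_loc:
  assumes m0: "0 < m" and cv: "0 < card VH" and dn: "card EH * (2*m+1) = 5*m*card VH"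
  shows "\<exists>\<tau>::nat\<Rightarrow>bool. \<forall>i<m. card {j \<in> cl i. \<tau> j} = 1"
proof -
  have M: "3 \<le> m" using m3 m0 .
  have ci: "card I = 2 * card EH" by (rule I_card)
  show ?thesis
  proof (cases "Apex \<in> B")
    case False
    have "\<And>x. x \<in> B \<Longrightarrow> Dg x \<le> 4"
    proof -
      fix x assume x: "x \<in> B"
      hence "x \<noteq> Apex" using False by blast
      thus "Dg x \<le> 4" using Dg_bound x by blast
    qed
    hence "(\<Sum>x\<in>B. Dg x) \<le> card B * 4"
      using sum_bounded_above[of B Dg 4] by simp
    hence "2 * card EH \<le> 4 * card VH" using ci I_split cardB by simp
    hence "(2*m+1) * (2 * card EH) \<le> (2*m+1) * (4 * card VH)" by (rule mult_le_mono2)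
    moreover have "(2*m+1)*(2*card EH) = 2*(card EH*(2*m+1))" by (simp add: algebra_simps)
    moreover have "2*(card EH*(2*m+1)) = (10*m)*card VH" using dn by simp
    moreover have "(2*m+1)*(4*card VH) = (8*m+4)*card VH" by (simp add: algebra_simps)
    ultimately have "(10*m) * card VH \<le> (8*m+4) * card VH" by linarith
    hence "0 < card VH \<longrightarrow> 10*m \<le> 8*m+4" by (simp only: mult_le_cancel2)
    hence "10*m \<le> 8*m+4" using cv by blast
    thus ?thesis using M by simp
  next
    case True
    let ?a = "\<lambda>i. (2*m+1) * card (F i)" and ?b = "\<lambda>i. 10 + 10*m*card (X i)"
    have le: "\<forall>i\<in>{..<m}. ?a i \<le> ?b i"
    proof
      fix i assume "i \<in> {..<m}"
      hence "i < m" by simp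
      thus "?a i \<le> ?b i" using clause_bound[OF _ M] by blast
    qed
    have "sum ?a {..<m} = (2*m+1) * card I" using I_split2 by (simp add: sum_distrib_left)
    also have "\<dots> = 2 * (card EH * (2*m+1))" using ci by (simp add: algebra_simps)
    also have "\<dots> = 2 * (5*m*card VH)" using dn by simp
    also have "\<dots> = 10*m * (1 + (\<Sum>i<m. card (X i)))" using B_split[OF True] cardB by simp
    also have "\<dots> = sum ?b {..<m}" by (simp add: sum.distrib sum_distrib_left algebra_simps)
    finally have eqs: "sum ?a {..<m} = sum ?b {..<m}" .
    have eqi: "\<forall>i<m. ?a i = ?b i"
    proof (rule ccontr)
      assume "\<not> (\<forall>i<m. ?a i = ?b i)"
      then obtain i where i: "i < m" "?a i \<noteq> ?b i" by blast
      have "?a i \<le> ?b i" using le i(1) by blast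
      hence "?a i < ?b i" using i(2) by linarith
      hence "\<exists>i\<in>{..<m}. ?a i < ?b i" using i(1) by blast
      hence "sum ?a {..<m} < sum ?b {..<m}" using sum_strict_mono_ex1[of "{..<m}" ?a ?b] le by simp
      thus False using eqs by simp
    qed
    have good: "\<And>i. i < m \<Longrightarrow> card (X i) = 2 \<and> (\<forall>x\<in>X i. is_cyc x \<and> Dg x = 4)"
    proof -
      fix i assume i: "i < m"
      have "?a i = ?b i" using eqi i by blast
      thus "card (X i) = 2 \<and> (\<forall>x\<in>X i. is_cyc x \<and> Dg x = 4)"
        using mp[OF conjunct2[OF clause_bound[OF i M]]] by blast
    qed
    have allB: "\<forall>x\<in>B. x \<noteq> Apex \<longrightarrow> is_cyc x \<and> Dg x = 4"
    proof (intro ballI impI)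
      fix x assume x: "x \<in> B" "x \<noteq> Apex"
      have "x \<in> V" using x(1) phiV by blast
      hence "grp ord x < m" using grp_lt x(2) by blast
      moreover have "x \<in> X (grp ord x)" using x unfolding X_def by simp
      ultimately show "is_cyc x \<and> Dg x = 4" using good by blast
    qed
    let ?\<tau> = "\<lambda>j. Cyc j 0 \<notin> B"
    have res: "\<forall>i<m. card {j \<in> cl i. ?\<tau> j} = 1"
    proof (intro allI impI)
      fix i assume i: "i < m"
      let ?T = "{j \<in> cl i. Cyc j 0 \<in> B}"
      have g: "card (X i) = 2" "\<forall>x\<in>X i. is_cyc x" using good[OF i] by auto
      have "vj ` X i = ?T"
      proof
        show "vj ` X i \<subseteq> ?T"
        proof
          fix y assume "y \<in> vj ` X i"
          then obtain x where x: "x \<in> X i" "y = vj x" by blast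
          obtain j t where jt: "x = Cyc j t" "j < p" "t < d j" "ord j t = i" "j \<in> cl i"
            using X_cyc[OF x(1)] g(2) x(1) by blast
          have "Cyc j t \<in> B" using x(1) jt(1) unfolding X_def by simp
          hence "Cyc j 0 \<in> B" using cyc_iff[OF allB jt(3)] by simp
          thus "y \<in> ?T" using x(2) jt by simp
        qed
        show "?T \<subseteq> vj ` X i"
        proof
          fix j assume j: "j \<in> ?T"
          obtain t where t: "t < d j" "ord j t = i" using ord_surj[OF i] j by blast
          have "Cyc j t \<in> B" using cyc_iff[OF allB t(1)] j by simp
          hence "Cyc j t \<in> X i" using t(2) unfolding X_def by simp
          moreover have "j = vj (Cyc j t)" by simp
          ultimately show "j \<in> vj ` X i" by (rule rev_image_eqI)
        qed
      qed
      moreover have "card (vj ` X i) = card (X i)" using X_inj[OF g(2)] by (rule card_image)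
      ultimately have "card ?T = 2" using g(1) by simp
      moreover have c3: "card (cl i) = 3" using clauses i by simp
      moreover have "finite (cl i)"
      proof -
        have "0 < card (cl i)" using c3 by simp
        thus ?thesis by (simp add: card_gt_0_iff)
      qed
      moreover have "{j \<in> cl i. ?\<tau> j} = cl i - ?T" by auto
      ultimately show "card {j \<in> cl i. ?\<tau> j} = 1"
      proof -
        assume a: "card ?T = 2" "card (cl i) = 3" "finite (cl i)" "{j \<in> cl i. ?\<tau> j} = cl i - ?T"
        have sub: "?T \<subseteq> cl i" by blast
        have fT: "finite ?T" using a(3) by simp
        have c: "card (cl i - ?T) = card (cl i) - card ?T" by (rule card_Diff_subset[OF fT sub])
        have "card {j \<in> cl i. ?\<tau> j} = card (cl i - ?T)" using a(4) by (rule arg_cong)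
        thus ?thesis using c a(1,2) by linarith
      qed
    qed
    show ?thesis by (rule exI[where x="\<lambda>j. Cyc j 0 \<notin> B"], rule res)
  qed
qed

end

theorem lemma5:
  fixes m p :: nat and cl :: "nat \<Rightarrow> nat set" and ord :: "nat \<Rightarrow> nat \<Rightarrow> nat"
    and VH :: "'h set" and EH :: "'h set set"
  assumes clauses: "\<forall>i<m. cl i \<subseteq> {..<p} \<and> card (cl i) = 3"
    and occ: "\<forall>j<p. 3 \<le> deg m cl j"
    and cyc: "\<forall>j<p. bij_betw (ord j) {..<deg m cl j} {i. i < m \<and> j \<in> cl i}"
    and H: "simple_graph VH EH"
    and minor: "one_shallow_top_minor VH EH (G_verts m p cl) (G_edges m p cl ord)"
    and dens: "density VH EH = 5 * real m / (2 * real m + 1)"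
  shows "\<exists>\<tau> :: nat \<Rightarrow> bool. \<forall>i<m. card {j \<in> cl i. \<tau> j} = 1"
proof (cases "m = 0")
  case True thus ?thesis by simp
next
  case False
  hence m0: "0 < m" by simp
  obtain \<phi> :: "'h \<Rightarrow> gvert" and P :: "'h set \<Rightarrow> gvert list" where
    mi: "inj_on \<phi> VH" "\<phi> ` VH \<subseteq> G_verts m p cl"
      "\<forall>e\<in>EH.
           2 \<le> length (P e) \<and> length (P e) \<le> 4 \<and> distinct (P e) \<and>
           set (P e) \<subseteq> G_verts m p cl \<and>
           \<phi> ` e = {hd (P e), last (P e)} \<and>
           (\<forall>k. Suc k < length (P e) \<longrightarrow> {P e ! k, P e ! Suc k} \<in> G_edges m p cl ord) \<and>
           inner (P e) \<inter> \<phi> ` VH = {}"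
      "\<forall>e\<in>EH. \<forall>e'\<in>EH. e \<noteq> e' \<longrightarrow> inner (P e) \<inter> inner (P e') = {}"
    by (insert minor[unfolded one_shallow_top_minor_def], elim exE conjE, rule that, assumption+)
  interpret L m p cl ord VH EH \<phi> P
    by (unfold_locales; (rule clauses | rule occ | rule cyc | rule H | rule mi(1) | rule mi(2) | rule mi(3) | rule mi(4)))
  have pos: "0 < 5 * real m / (2 * real m + 1)" using m0 by simp
  have cv: "0 < card VH"
  proof (rule ccontr)
    assume "\<not> 0 < card VH"
    hence "card VH = 0" by simp
    hence "density VH EH = 0" unfolding density_def by simp
    thus False using dens pos by simp
  qed
  have "real (card EH) / real (card VH) = 5 * real m / (2 * real m + 1)"
    using dens unfolding density_def .
  hence "real (card EH) * (2 * real m + 1) = 5 * real m * real (card VH)"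
    using cv by (simp add: field_simps)
  moreover have "real (card EH * (2*m+1)) = real (card EH) * (2 * real m + 1)" by (simp add: algebra_simps)
  moreover have "real (5*m*card VH) = 5 * real m * real (card VH)" by simp
  ultimately have "real (card EH * (2*m+1)) = real (5*m*card VH)" by simp
  hence dn: "card EH * (2*m+1) = 5*m*card VH" by (rule of_nat_eq_iff[THEN iffD1])
  show ?thesis using main_loc[OF m0 cv dn] .
qed
end
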